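(* Let $A$, $Y$, $\hat{Y}$ be random variables on a common probability space, where $A$ takes values in a finite set $\mathcal{A}$ and $Y,\hat{Y}$ take values in a finite set $\mathcal{Y}$. Identify each element of a finite value set with its one-hot vector, use the $\ell_p$-norm $\|\cdot\|_p$ ($p\ge 1$) as ground metric, and for pairs use the $\ell_p$-norm of the concatenated one-hot vectors. For $a\in\mathcal{A}$, $y\in\mathcal{Y}$ let $$\mathbf{DP}_{a,y}=\mathbb{P}(\hat{Y}=y\mid A=a)-\mathbb{P}(\hat{Y}=y),\qquad \mathbf{EO}_{a,y}=\mathbb{P}(\hat{Y}=Y\mid Y=y,A=a)-\mathbb{P}(\hat{Y}=Y\mid Y=y).$$ Then $$I_W(\hat{Y},A)=\frac{\sqrt[p]{2}}{2}\sum_{a\in\mathcal{A}}\mathbb{P}(A=a)\sum_{y\in\mathcal{Y}}\left|\mathbf{DP}_{a,y}\right|,$$ and, for every $y\in\mathcal{Y}$, $$I_W\big((\hat{Y}=Y)\mid Y=y,\;A\mid Y=y\big)=\sqrt[p]{2}\sum_{a\in\mathcal{A}}\mathbb{P}(A=a\mid Y=y)\left|\mathbf{EO}_{a,y}\right|.$$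
   Context: For random variables $U,V$, the Wasserstein Dependency Measure is $I_W(U,V)=W_1(p(U,V),p(U)p(V))$, where $W_1$ is the 1-Wasserstein (earth mover's) distance with respect to the ground metric, $p(U,V)$ is the joint law and $p(U)p(V)$ the product of the marginal laws. The quantity $I_W((\hat{Y}=Y)\mid Y=y, A\mid Y=y)$ denotes $W_1$ between the joint law of the binary indicator $\mathbb{1}[\hat{Y}=Y]$ and $A$ conditionally on $Y=y$, and the product of their conditional marginals given $Y=y$ (the binary indicator also being one-hot encoded). With one-hot encoding and the $\ell_p$ ground metric, two distinct values of the same variable are at distance $\sqrt[p]{2}$. *)

theory Defs
  imports "HOL-Probability.Probability"
begin

text \<open>One-hot encoding of an element v of a finite value set, as a real vector
  indexed by the value set (coordinates outside the value set are irrelevant).\<close>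
definition onehot :: "'x \<Rightarrow> 'x \<Rightarrow> real" where
  "onehot v = (\<lambda>i. if i = v then 1 else 0)"

definition onehot_pair :: "'x \<times> 'z \<Rightarrow> ('x + 'z) \<Rightarrow> real" where
  "onehot_pair u = case_sum (onehot (fst u)) (onehot (snd u))"

definition lp_dist :: "'i set \<Rightarrow> real \<Rightarrow> ('i \<Rightarrow> real) \<Rightarrow> ('i \<Rightarrow> real) \<Rightarrow> real" where
  "lp_dist I p f g = (\<Sum>i\<in>I. \<bar>f i - g i\<bar> powr p) powr (1 / p)"

definition coupling :: "'x set \<Rightarrow> ('x \<Rightarrow> real) \<Rightarrow> ('x \<Rightarrow> real) \<Rightarrow> ('x \<times> 'x \<Rightarrow> real) \<Rightarrow> bool" where
  "coupling X P Q \<gamma> \<longleftrightarrow>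
     (\<forall>z. \<gamma> z \<ge> 0) \<and> (\<forall>z. z \<notin> X \<times> X \<longrightarrow> \<gamma> z = 0) \<and>
     (\<forall>u\<in>X. (\<Sum>v\<in>X. \<gamma> (u, v)) = P u) \<and>
     (\<forall>v\<in>X. (\<Sum>u\<in>X. \<gamma> (u, v)) = Q v)"

definition W1 :: "'x set \<Rightarrow> ('x \<Rightarrow> 'x \<Rightarrow> real) \<Rightarrow> ('x \<Rightarrow> real) \<Rightarrow> ('x \<Rightarrow> real) \<Rightarrow> real" where
  "W1 X d P Q = Inf {(\<Sum>z\<in>X \<times> X. \<gamma> z * d (fst z) (snd z)) | \<gamma>. coupling X P Q \<gamma>}"

definition pair_metric :: "'x set \<Rightarrow> 'z set \<Rightarrow> real \<Rightarrow> 'x \<times> 'z \<Rightarrow> 'x \<times> 'z \<Rightarrow> real" where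
  "pair_metric Xs Zs p u v = lp_dist (Xs <+> Zs) p (onehot_pair u) (onehot_pair v)"

definition IW :: "'w measure \<Rightarrow> real \<Rightarrow> 'x set \<Rightarrow> 'z set \<Rightarrow> ('w \<Rightarrow> 'x) \<Rightarrow> ('w \<Rightarrow> 'z) \<Rightarrow> real" where
  "IW M p Us Vs U V =
     W1 (Us \<times> Vs) (pair_metric Us Vs p)
        (\<lambda>(u, v). \<P>(w in M. U w = u \<and> V w = v))
        (\<lambda>(u, v). \<P>(w in M. U w = u) * \<P>(w in M. V w = v))"

definition IW_cond :: "'w measure \<Rightarrow> real \<Rightarrow> 'x set \<Rightarrow> 'z set \<Rightarrow> ('w \<Rightarrow> 'x) \<Rightarrow> ('w \<Rightarrow> 'z) \<Rightarrow> ('w \<Rightarrow> bool) \<Rightarrow> real" where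
  "IW_cond M p Us Vs U V C =
     W1 (Us \<times> Vs) (pair_metric Us Vs p)
        (\<lambda>(u, v). \<P>(w in M. U w = u \<and> V w = v \<bar> C w))
        (\<lambda>(u, v). \<P>(w in M. U w = u \<bar> C w) * \<P>(w in M. V w = v \<bar> C w))"

end

theory Submission
  imports Defs
begin

lemma onehot_sum:
  assumes "finite S" "u \<in> S" "u' \<in> S" "p > 0"
  shows "(\<Sum>i\<in>S. \<bar>onehot u i - onehot u' i\<bar> powr p) = (if u = u' then 0 else 2)"
proof (cases "u = u'")
  case True then show ?thesis by (simp add: onehot_def)
next
  case False
  have "(\<Sum>i\<in>S. \<bar>onehot u i - onehot u' i\<bar> powr p) = (\<Sum>i\<in>S. (if i = u then 1 else 0) + (if i = u' then 1 else 0))"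
    by (rule sum.cong) (use False in \<open>auto simp: onehot_def\<close>)
  also have "\<dots> = 2" using assms by (simp add: sum.distrib)
  finally show ?thesis using False by simp
qed

lemma pair_metric_eq:
  assumes "finite Us" "finite Vs" "u \<in> Us" "u' \<in> Us" "v \<in> Vs" "v' \<in> Vs" "p > 0"
  shows "pair_metric Us Vs p (u, v) (u', v') =
     ((if u = u' then 0 else 2) + (if v = v' then 0 else 2)) powr (1 / p)"
  unfolding pair_metric_def lp_dist_def
  using assms by (simp add: sum.Plus o_def onehot_pair_def onehot_sum)

lemma pm_diag:
  assumes "finite Us" "finite Vs" "z \<in> Us \<times> Vs" "p > 0"
  shows "pair_metric Us Vs p z z = 0"
  using assms pair_metric_eq[of Us Vs "fst z" "fst z" "snd z" "snd z" p] by auto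

lemma pm_ge:
  assumes "finite Us" "finite Vs" "z \<in> Us \<times> Vs" "w \<in> Us \<times> Vs" "z \<noteq> w" "p > 0"
  shows "pair_metric Us Vs p z w \<ge> 2 powr (1/p)"
proof -
  obtain u v u' v' where z: "z = (u, v)" and w: "w = (u', v')" by (cases z, cases w) auto
  have "(2::real) \<le> (if u = u' then 0 else 2) + (if v = v' then 0 else 2)"
    using assms z w by auto
  then have "2 powr (1/p) \<le> ((if u = u' then 0 else 2) + (if v = v' then 0 else 2)) powr (1 / p)"
    using assms by (intro powr_mono2) auto
  then show ?thesis using pair_metric_eq[of Us Vs u u' v v' p] assms z w by auto
qed

lemma pm_slice:
  assumes "finite Us" "finite Vs" "z \<in> Us \<times> Vs" "w \<in> Us \<times> Vs" "z \<noteq> w" "snd z = snd w" "p > 0"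
  shows "pair_metric Us Vs p z w = 2 powr (1/p)"
proof -
  obtain u v u' v' where z: "z = (u, v)" and w: "w = (u', v')" by (cases z, cases w) auto
  show ?thesis using pair_metric_eq[of Us Vs u u' v v' p] assms z w by auto
qed


lemma W1_lower:
  fixes Us :: "'x set" and Vs :: "'z set"
  assumes fin: "finite Us" "finite Vs" and p: "p > 0"
    and cpl: "coupling (Us \<times> Vs) P Q \<gamma>"
  shows "2 powr (1/p) / 2 * (\<Sum>z\<in>Us \<times> Vs. \<bar>P z - Q z\<bar>)
         \<le> (\<Sum>z\<in>(Us \<times> Vs) \<times> (Us \<times> Vs). \<gamma> z * pair_metric Us Vs p (fst z) (snd z))"
proof -
  define X where "X = Us \<times> Vs"
  define c where "c = 2 powr (1/p)"
  have finX: "finite X" using fin by (simp add: X_def)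
  have g0: "\<And>z. \<gamma> z \<ge> 0" and rows: "\<And>u. u \<in> X \<Longrightarrow> (\<Sum>v\<in>X. \<gamma> (u, v)) = P u"
    and cols: "\<And>v. v \<in> X \<Longrightarrow> (\<Sum>u\<in>X. \<gamma> (u, v)) = Q v"
    using cpl by (auto simp: coupling_def X_def)
  define OFF where "OFF = (\<Sum>z\<in>X. \<Sum>w\<in>X. if z \<noteq> w then \<gamma> (z, w) else 0)"
  have c0: "c \<ge> 0" by (simp add: c_def)
  have "(\<Sum>z\<in>X \<times> X. \<gamma> z * pair_metric Us Vs p (fst z) (snd z))
      = (\<Sum>z\<in>X. \<Sum>w\<in>X. \<gamma> (z, w) * pair_metric Us Vs p z w)"
    by (simp add: sum.cartesian_product case_prod_beta)
  also have "\<dots> \<ge> (\<Sum>z\<in>X. \<Sum>w\<in>X. c * (if z \<noteq> w then \<gamma> (z, w) else 0))"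
  proof (intro sum_mono)
    fix z w assume "z \<in> X" "w \<in> X"
    then show "c * (if z \<noteq> w then \<gamma> (z, w) else 0) \<le> \<gamma> (z, w) * pair_metric Us Vs p z w"
      using pm_ge[of Us Vs z w p] pm_diag[of Us Vs z p] fin p g0[of "(z,w)"]
      by (auto simp: X_def c_def mult.commute intro: mult_left_mono)
  qed
  also have "(\<Sum>z\<in>X. \<Sum>w\<in>X. c * (if z \<noteq> w then \<gamma> (z, w) else 0)) = c * OFF"
    by (simp add: OFF_def sum_distrib_left)
  finally have cost: "c * OFF \<le> (\<Sum>z\<in>X \<times> X. \<gamma> z * pair_metric Us Vs p (fst z) (snd z))" .
  have pt: "\<bar>P z - Q z\<bar> \<le> (\<Sum>w\<in>X. if z \<noteq> w then \<gamma> (z, w) else 0) + (\<Sum>w\<in>X. if w \<noteq> z then \<gamma> (w, z) else 0)"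
    if z: "z \<in> X" for z
  proof -
    have "P z = \<gamma> (z, z) + (\<Sum>w\<in>X. if z \<noteq> w then \<gamma> (z, w) else 0)"
    proof -
      have "P z = (\<Sum>w\<in>X. (if z = w then \<gamma> (z, w) else 0) + (if z \<noteq> w then \<gamma> (z, w) else 0))"
        by (simp add: rows[OF z, symmetric] if_distrib cong: sum.cong) (rule sum.cong, auto)
      then show ?thesis using z finX by (simp add: sum.distrib)
    qed
    moreover have "Q z = \<gamma> (z, z) + (\<Sum>w\<in>X. if w \<noteq> z then \<gamma> (w, z) else 0)"
    proof -
      have "Q z = (\<Sum>w\<in>X. (if w = z then \<gamma> (w, z) else 0) + (if w \<noteq> z then \<gamma> (w, z) else 0))"
        by (simp add: cols[OF z, symmetric]) (rule sum.cong, auto)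
      then show ?thesis using z finX by (simp add: sum.distrib)
    qed
    moreover have "(\<Sum>w\<in>X. if z \<noteq> w then \<gamma> (z, w) else 0) \<ge> 0" "(\<Sum>w\<in>X. if w \<noteq> z then \<gamma> (w, z) else 0) \<ge> 0"
      by (rule sum_nonneg, simp add: g0)+
    ultimately show ?thesis by linarith
  qed
  have "(\<Sum>z\<in>X. \<bar>P z - Q z\<bar>) \<le> (\<Sum>z\<in>X. (\<Sum>w\<in>X. if z \<noteq> w then \<gamma> (z, w) else 0) + (\<Sum>w\<in>X. if w \<noteq> z then \<gamma> (w, z) else 0))"
    by (rule sum_mono) (rule pt)
  also have "\<dots> = OFF + OFF"
  proof -
    have "(\<Sum>z\<in>X. \<Sum>w\<in>X. if w \<noteq> z then \<gamma> (w, z) else 0) = OFF"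
      unfolding OFF_def by (rule sum.swap)
    then show ?thesis unfolding sum.distrib OFF_def by simp
  qed
  finally have "(\<Sum>z\<in>X. \<bar>P z - Q z\<bar>) \<le> 2 * OFF" by simp
  then have "c / 2 * (\<Sum>z\<in>X. \<bar>P z - Q z\<bar>) \<le> c / 2 * (2 * OFF)" using c0
    by (intro mult_left_mono) auto
  then have "c / 2 * (\<Sum>z\<in>X. \<bar>P z - Q z\<bar>) \<le> c * OFF" by simp
  with cost have "c / 2 * (\<Sum>z\<in>X. \<bar>P z - Q z\<bar>) \<le> (\<Sum>z\<in>X \<times> X. \<gamma> z * pair_metric Us Vs p (fst z) (snd z))"
    by linarith
  then show ?thesis by (simp only: X_def c_def)
qed


lemma sum_delta_conj:
  assumes "finite S" "v \<in> S"
  shows "(\<Sum>v'\<in>S. if v' = v \<and> R v' then f v' else 0) = (if R v then f v else (0::real))"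
proof -
  have "(\<Sum>v'\<in>S. if v' = v \<and> R v' then f v' else 0) = (\<Sum>v'\<in>S. if v' = v then (if R v then f v else 0) else 0)"
    by (rule sum.cong) auto
  then show ?thesis using assms by simp
qed

lemma W1_upper:
  fixes Us :: "'x set" and Vs :: "'z set" and P Q :: "'x \<times> 'z \<Rightarrow> real"
  assumes fin: "finite Us" "finite Vs" and p: "p > 0"
    and P0: "\<And>z. z \<in> Us \<times> Vs \<Longrightarrow> P z \<ge> 0" and Q0: "\<And>z. z \<in> Us \<times> Vs \<Longrightarrow> Q z \<ge> 0"
    and sl: "\<And>v. v \<in> Vs \<Longrightarrow> (\<Sum>u\<in>Us. P (u, v)) = (\<Sum>u\<in>Us. Q (u, v))"
  shows "\<exists>\<gamma>. coupling (Us \<times> Vs) P Q \<gamma> \<and>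
     (\<Sum>z\<in>(Us \<times> Vs) \<times> (Us \<times> Vs). \<gamma> z * pair_metric Us Vs p (fst z) (snd z))
       = 2 powr (1/p) / 2 * (\<Sum>z\<in>Us \<times> Vs. \<bar>P z - Q z\<bar>)"
proof -
  define X where "X = Us \<times> Vs"
  define c where "c = 2 powr (1/p)"
  have finX: "finite X" using fin by (simp add: X_def)
  define pos where "pos z = max (P z - Q z) 0" for z
  define neg where "neg z = max (Q z - P z) 0" for z
  define D where "D v = (\<Sum>u\<in>Us. pos (u, v))" for v
  have pos0: "pos z \<ge> 0" for z by (simp add: pos_def)
  have neg0: "neg z \<ge> 0" for z by (simp add: neg_def)
  have negD: "(\<Sum>u\<in>Us. neg (u, v)) = D v" if v: "v \<in> Vs" for v
  proof -
    have "(\<Sum>u\<in>Us. pos (u, v)) - (\<Sum>u\<in>Us. neg (u, v)) = (\<Sum>u\<in>Us. P (u, v)) - (\<Sum>u\<in>Us. Q (u, v))"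
      unfolding sum_subtractf[symmetric] by (rule sum.cong) (auto simp: pos_def neg_def)
    then show ?thesis using sl[OF v] by (simp add: D_def)
  qed
  have posD: "pos (u, v) \<le> D v" if "u \<in> Us" for u v
    unfolding D_def using that fin pos0 by (intro member_le_sum) auto
  define T2 where "T2 z w = (if snd z = snd w \<and> D (snd z) \<noteq> 0 then pos z * neg w / D (snd z) else 0)" for z w
  define \<gamma> where "\<gamma> zw = (if fst zw \<in> X \<and> snd zw \<in> X then
      (if fst zw = snd zw then min (P (fst zw)) (Q (fst zw)) else 0) + T2 (fst zw) (snd zw) else 0)" for zw
  have row: "(\<Sum>w\<in>X. T2 z w) = pos z" if z: "z \<in> X" for z
  proof -
    obtain u v where zz: "z = (u, v)" and u: "u \<in> Us" and v: "v \<in> Vs" using z by (auto simp: X_def)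
    have "(\<Sum>w\<in>X. T2 z w) = (\<Sum>u'\<in>Us. \<Sum>v'\<in>Vs. T2 z (u', v'))"
      unfolding X_def by (simp add: sum.cartesian_product)
    also have "\<dots> = (\<Sum>u'\<in>Us. if D v \<noteq> 0 then pos z * neg (u', v) / D v else 0)"
      by (rule sum.cong) (use fin v in \<open>auto simp: T2_def zz if_distrib cong: if_cong\<close>)
    also have "\<dots> = pos z"
    proof (cases "D v = 0")
      case True
      then show ?thesis using posD[OF u, of v] pos0[of z] zz by simp
    next
      case False
      have "(\<Sum>u'\<in>Us. pos z * neg (u', v) / D v) = pos z / D v * (\<Sum>u'\<in>Us. neg (u', v))"
        by (simp add: sum_distrib_left)
      then show ?thesis using False negD[OF v] by simp
    qed
    finally show ?thesis .
  qed
  have col: "(\<Sum>z\<in>X. T2 z w) = neg w" if w: "w \<in> X" for w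
  proof -
    obtain u v where ww: "w = (u, v)" and u: "u \<in> Us" and v: "v \<in> Vs" using w by (auto simp: X_def)
    have "(\<Sum>z\<in>X. T2 z w) = (\<Sum>u'\<in>Us. \<Sum>v'\<in>Vs. T2 (u', v') w)"
      unfolding X_def by (simp add: sum.cartesian_product)
    also have "\<dots> = (\<Sum>u'\<in>Us. if D v \<noteq> 0 then pos (u', v) * neg w / D v else 0)"
      by (rule sum.cong) (use fin v in \<open>auto simp: T2_def ww sum_delta_conj\<close>)
    also have "\<dots> = neg w"
    proof (cases "D v = 0")
      case True
      have "neg w \<le> D v" using negD[OF v] u fin neg0 member_le_sum[of u Us "\<lambda>u. neg (u, v)"] ww by auto
      then show ?thesis using True neg0[of w] by simp
    next
      case False
      have "(\<Sum>u'\<in>Us. pos (u', v) * neg w / D v) = neg w / D v * (\<Sum>u'\<in>Us. pos (u', v))"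
        by (simp add: sum_distrib_left sum_distrib_right mult.commute)
      then show ?thesis using False by (simp add: D_def)
    qed
    finally show ?thesis .
  qed
  have T20: "T2 z w \<ge> 0" for z w
  proof -
    have "D v \<ge> 0" for v unfolding D_def using pos0 by (simp add: sum_nonneg)
    then show ?thesis using pos0 neg0 by (simp add: T2_def)
  qed
  have cpl: "coupling X P Q \<gamma>"
    unfolding coupling_def
  proof (intro conjI ballI allI impI)
    fix z show "\<gamma> z \<ge> 0" using P0 Q0 T20 by (auto simp: \<gamma>_def X_def)
  next
    fix z assume "z \<notin> X \<times> X" then show "\<gamma> z = 0" by (cases z) (auto simp: \<gamma>_def)
  next
    fix u assume u: "u \<in> X"
    have "(\<Sum>v\<in>X. \<gamma> (u, v)) = (\<Sum>v\<in>X. (if u = v then min (P u) (Q u) else 0) + T2 u v)"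
      by (rule sum.cong) (use u in \<open>auto simp: \<gamma>_def\<close>)
    also have "\<dots> = min (P u) (Q u) + pos u" using u finX by (simp add: sum.distrib row)
    also have "\<dots> = P u" by (simp add: pos_def)
    finally show "(\<Sum>v\<in>X. \<gamma> (u, v)) = P u" .
  next
    fix v assume v: "v \<in> X"
    have "(\<Sum>u\<in>X. \<gamma> (u, v)) = (\<Sum>u\<in>X. (if u = v then min (P v) (Q v) else 0) + T2 u v)"
      by (rule sum.cong) (use v in \<open>auto simp: \<gamma>_def\<close>)
    also have "\<dots> = min (P v) (Q v) + neg v" using v finX by (simp add: sum.distrib col)
    also have "\<dots> = Q v" by (simp add: neg_def)
    finally show "(\<Sum>u\<in>X. \<gamma> (u, v)) = Q v" .
  qed
  have "(\<Sum>z\<in>X \<times> X. \<gamma> z * pair_metric Us Vs p (fst z) (snd z))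
      = (\<Sum>z\<in>X. \<Sum>w\<in>X. \<gamma> (z, w) * pair_metric Us Vs p z w)"
    by (simp add: sum.cartesian_product case_prod_beta)
  also have "\<dots> = (\<Sum>z\<in>X. \<Sum>w\<in>X. c * T2 z w)"
  proof (intro sum.cong refl)
    fix z w assume z: "z \<in> X" and w: "w \<in> X"
    show "\<gamma> (z, w) * pair_metric Us Vs p z w = c * T2 z w"
    proof (cases "z = w")
      case True
      have "pos z * neg z = 0" by (simp add: pos_def neg_def max_def)
      then have "T2 z w = 0" using True by (simp add: T2_def)
      then show ?thesis using True pm_diag[of Us Vs z p] fin p z by (simp add: X_def)
    next
      case False
      show ?thesis
      proof (cases "snd z = snd w")
        case True
        then show ?thesis using False pm_slice[of Us Vs z w p] fin p z w
          by (simp add: X_def \<gamma>_def c_def mult.commute)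
      next
        case F2: False
        then show ?thesis using False z w by (simp add: \<gamma>_def T2_def)
      qed
    qed
  qed
  also have "\<dots> = c * (\<Sum>z\<in>X. pos z)"
    by (simp add: sum_distrib_left[symmetric] row)
  also have "\<dots> = c / 2 * (\<Sum>z\<in>X. \<bar>P z - Q z\<bar>)"
  proof -
    have "(\<Sum>z\<in>X. \<bar>P z - Q z\<bar>) = (\<Sum>z\<in>X. pos z) + (\<Sum>z\<in>X. neg z)"
      unfolding sum.distrib[symmetric] by (rule sum.cong) (auto simp: pos_def neg_def)
    moreover have "(\<Sum>z\<in>X. neg z) = (\<Sum>z\<in>X. pos z)"
    proof -
      have "(\<Sum>z\<in>X. neg z) = (\<Sum>u\<in>Us. \<Sum>v\<in>Vs. neg (u, v))"
        unfolding X_def by (simp add: sum.cartesian_product)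
      also have "\<dots> = (\<Sum>v\<in>Vs. \<Sum>u\<in>Us. neg (u, v))" by (rule sum.swap)
      also have "\<dots> = (\<Sum>v\<in>Vs. D v)" by (rule sum.cong) (auto simp: negD)
      also have "\<dots> = (\<Sum>u\<in>Us. \<Sum>v\<in>Vs. pos (u, v))"
        unfolding D_def by (rule sum.swap)
      also have "\<dots> = (\<Sum>z\<in>X. pos z)"
        unfolding X_def by (simp add: sum.cartesian_product)
      finally show ?thesis .
    qed
    ultimately show ?thesis by simp
  qed
  finally show ?thesis using cpl by (auto simp: X_def c_def)
qed


lemma W1_eq:
  fixes Us :: "'x set" and Vs :: "'z set" and P Q :: "'x \<times> 'z \<Rightarrow> real"
  assumes fin: "finite Us" "finite Vs" and p: "p > 0"
    and P0: "\<And>z. z \<in> Us \<times> Vs \<Longrightarrow> P z \<ge> 0" and Q0: "\<And>z. z \<in> Us \<times> Vs \<Longrightarrow> Q z \<ge> 0"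
    and sl: "\<And>v. v \<in> Vs \<Longrightarrow> (\<Sum>u\<in>Us. P (u, v)) = (\<Sum>u\<in>Us. Q (u, v))"
  shows "W1 (Us \<times> Vs) (pair_metric Us Vs p) P Q = 2 powr (1/p) / 2 * (\<Sum>z\<in>Us \<times> Vs. \<bar>P z - Q z\<bar>)"
proof -
  obtain \<gamma> where g: "coupling (Us \<times> Vs) P Q \<gamma>"
    "(\<Sum>z\<in>(Us \<times> Vs) \<times> (Us \<times> Vs). \<gamma> z * pair_metric Us Vs p (fst z) (snd z))
       = 2 powr (1/p) / 2 * (\<Sum>z\<in>Us \<times> Vs. \<bar>P z - Q z\<bar>)"
    using W1_upper[OF assms] by blast
  show ?thesis unfolding W1_def
  proof (rule cInf_eq_minimum)
    show "2 powr (1/p) / 2 * (\<Sum>z\<in>Us \<times> Vs. \<bar>P z - Q z\<bar>) \<in> {(\<Sum>z\<in>(Us \<times> Vs) \<times> (Us \<times> Vs). \<gamma> z * pair_metric Us Vs p (fst z) (snd z)) |\<gamma>. coupling (Us \<times> Vs) P Q \<gamma>}"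
      using g by (metis (mono_tags, lifting) mem_Collect_eq)
  next
    fix x assume "x \<in> {(\<Sum>z\<in>(Us \<times> Vs) \<times> (Us \<times> Vs). \<gamma> z * pair_metric Us Vs p (fst z) (snd z)) |\<gamma>. coupling (Us \<times> Vs) P Q \<gamma>}"
    then show "2 powr (1/p) / 2 * (\<Sum>z\<in>Us \<times> Vs. \<bar>P z - Q z\<bar>) \<le> x"
      using W1_lower[OF fin p] by blast
  qed
qed


lemma pred_const_cs:
  assumes "X \<in> measurable M (count_space S)"
  shows "Measurable.pred M (\<lambda>w. X w = s)"
  by (rule pred_eq_const1[OF assms]) auto

lemma pred_eq_fin:
  assumes "finite S" "X \<in> measurable M (count_space S)" "Z \<in> measurable M (count_space S)"
  shows "Measurable.pred M (\<lambda>w. X w = Z w)"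
proof -
  have "{w\<in>space M. X w = Z w} = (\<Union>s\<in>S. {w\<in>space M. X w = s} \<inter> {w\<in>space M. Z w = s})"
    using measurable_space[OF assms(2)] measurable_space[OF assms(3)] by auto
  also have "\<dots> \<in> sets M"
    using pred_const_cs[OF assms(2)] pred_const_cs[OF assms(3)] assms(1)
    by (intro sets.finite_UN sets.Int) (auto simp: pred_def)
  finally show ?thesis by (simp add: pred_def)
qed

lemma (in prob_space) sum_partition:
  assumes "finite S" "\<And>w. w \<in> space M \<Longrightarrow> X w \<in> S" "\<And>s. Measurable.pred M (\<lambda>w. X w = s)"
    "Measurable.pred M E"
  shows "(\<Sum>s\<in>S. \<P>(w in M. X w = s \<and> E w)) = \<P>(w in M. E w)"
proof -
  have "(\<Sum>s\<in>S. \<P>(w in M. X w = s \<and> E w)) = measure M (\<Union>s\<in>S. {w\<in>space M. X w = s \<and> E w})"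
    using assms by (intro finite_measure_finite_Union[symmetric]) (auto simp: disjoint_family_on_def)
  also have "(\<Union>s\<in>S. {w\<in>space M. X w = s \<and> E w}) = {w\<in>space M. E w}"
    using assms(2) by auto
  finally show ?thesis .
qed

lemma (in prob_space) prob_split:
  assumes "Measurable.pred M B" "Measurable.pred M E"
  shows "\<P>(w in M. B w \<and> E w) + \<P>(w in M. \<not> B w \<and> E w) = \<P>(w in M. E w)"
proof -
  have "\<P>(w in M. B w \<and> E w) + \<P>(w in M. \<not> B w \<and> E w)
      = measure M ({w\<in>space M. B w \<and> E w} \<union> {w\<in>space M. \<not> B w \<and> E w})"
    using assms by (intro finite_measure_Union[symmetric]) auto
  also have "{w\<in>space M. B w \<and> E w} \<union> {w\<in>space M. \<not> B w \<and> E w} = {w\<in>space M. E w}" by auto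
  finally show ?thesis .
qed

theorem lemma1:
  fixes M :: "'w measure" and A :: "'w \<Rightarrow> 'a" and Y Yh :: "'w \<Rightarrow> 'y"
    and As :: "'a set" and Ys :: "'y set" and p :: real
  assumes "prob_space M"
    and "finite As" and "finite Ys"
    and "A \<in> measurable M (count_space As)"
    and "Y \<in> measurable M (count_space Ys)"
    and "Yh \<in> measurable M (count_space Ys)"
    and "p \<ge> 1"
  shows "(IW M p Ys As Yh A =
           (2 powr (1 / p)) / 2 *
             (\<Sum>a\<in>As. \<P>(w in M. A w = a) *
                (\<Sum>y\<in>Ys. \<bar>\<P>(w in M. Yh w = y \<bar> A w = a) - \<P>(w in M. Yh w = y)\<bar>))) \<and>
         (\<forall>y\<in>Ys. \<P>(w in M. Y w = y) > 0 \<longrightarrow>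
           IW_cond M p (UNIV :: bool set) As (\<lambda>w. Yh w = Y w) A (\<lambda>w. Y w = y) =
           2 powr (1 / p) *
             (\<Sum>a\<in>As. \<P>(w in M. A w = a \<bar> Y w = y) *
                \<bar>\<P>(w in M. Yh w = Y w \<bar> Y w = y \<and> A w = a) - \<P>(w in M. Yh w = Y w \<bar> Y w = y)\<bar>))"
proof -
  interpret prob_space M by fact
  have p0: "p > 0" using assms(7) by simp
  note predA[measurable] = pred_const_cs[OF assms(4)]
  note predY[measurable] = pred_const_cs[OF assms(5)]
  note predYh[measurable] = pred_const_cs[OF assms(6)]
  note predEq[measurable] = pred_eq_fin[OF assms(3) assms(6) assms(5)]
  have Yh_in: "\<And>w. w \<in> space M \<Longrightarrow> Yh w \<in> Ys" using measurable_space[OF assms(6)] by auto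
  show ?thesis
  proof (intro conjI ballI impI)
    define P where "P = (\<lambda>(u, v). \<P>(w in M. Yh w = u \<and> A w = v))"
    define Q where "Q = (\<lambda>(u, v). \<P>(w in M. Yh w = u) * \<P>(w in M. A w = v))"
    have sl: "(\<Sum>u\<in>Ys. P (u, v)) = (\<Sum>u\<in>Ys. Q (u, v))" if "v \<in> As" for v
    proof -
      have "(\<Sum>u\<in>Ys. P (u, v)) = \<P>(w in M. A w = v)"
        unfolding P_def using sum_partition[OF assms(3) Yh_in predYh, of "\<lambda>w. A w = v"] by simp
      moreover have "(\<Sum>u\<in>Ys. \<P>(w in M. Yh w = u)) = 1"
        using sum_partition[OF assms(3) Yh_in predYh, of "\<lambda>w. True"] by (simp add: prob_space)
      then have "(\<Sum>u\<in>Ys. Q (u, v)) = \<P>(w in M. A w = v)"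
        unfolding Q_def by (simp add: sum_distrib_right[symmetric])
      ultimately show ?thesis by simp
    qed
    have "IW M p Ys As Yh A = 2 powr (1/p) / 2 * (\<Sum>z\<in>Ys \<times> As. \<bar>P z - Q z\<bar>)"
      unfolding IW_def P_def[symmetric] Q_def[symmetric]
      by (rule W1_eq[OF assms(3,2) p0 _ _ sl]) (auto simp: P_def Q_def)
    also have "(\<Sum>z\<in>Ys \<times> As. \<bar>P z - Q z\<bar>) = (\<Sum>a\<in>As. \<Sum>y\<in>Ys. \<bar>P (y, a) - Q (y, a)\<bar>)"
      by (subst sum.swap) (simp add: sum.cartesian_product)
    also have "\<dots> = (\<Sum>a\<in>As. \<P>(w in M. A w = a) *
                (\<Sum>y\<in>Ys. \<bar>\<P>(w in M. Yh w = y \<bar> A w = a) - \<P>(w in M. Yh w = y)\<bar>))"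
    proof (rule sum.cong[OF refl])
      fix a assume a: "a \<in> As"
      show "(\<Sum>y\<in>Ys. \<bar>P (y, a) - Q (y, a)\<bar>) = \<P>(w in M. A w = a) *
                (\<Sum>y\<in>Ys. \<bar>\<P>(w in M. Yh w = y \<bar> A w = a) - \<P>(w in M. Yh w = y)\<bar>)"
      proof (cases "\<P>(w in M. A w = a) = 0")
        case True
        have "\<P>(w in M. Yh w = y \<and> A w = a) \<le> \<P>(w in M. A w = a)" for y
          by (rule finite_measure_mono) auto
        then have "\<P>(w in M. Yh w = y \<and> A w = a) = 0" for y
          using True measure_nonneg[of M] by (metis order_antisym)
        then show ?thesis using True by (simp add: P_def Q_def)
      next
        case False
        then have pa: "\<P>(w in M. A w = a) > 0" using measure_nonneg[of M] by (metis order_le_neq_trans)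
        have "\<P>(w in M. A w = a) * \<bar>x / \<P>(w in M. A w = a) - q\<bar> = \<bar>x - q * \<P>(w in M. A w = a)\<bar>" for x q
        proof -
          have "\<P>(w in M. A w = a) * \<bar>x / \<P>(w in M. A w = a) - q\<bar> = \<bar>\<P>(w in M. A w = a) * (x / \<P>(w in M. A w = a) - q)\<bar>"
            using pa by (simp add: abs_mult)
          also have "\<dots> = \<bar>x - q * \<P>(w in M. A w = a)\<bar>" using pa by (simp add: right_diff_distrib mult.commute)
          finally show ?thesis .
        qed
        then show ?thesis
          by (simp add: sum_distrib_left P_def Q_def cond_prob_def)
      qed
    qed
    finally show "IW M p Ys As Yh A =
           (2 powr (1 / p)) / 2 *
             (\<Sum>a\<in>As. \<P>(w in M. A w = a) *
                (\<Sum>y\<in>Ys. \<bar>\<P>(w in M. Yh w = y \<bar> A w = a) - \<P>(w in M. Yh w = y)\<bar>))" .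
  next
    fix y assume y: "y \<in> Ys" and pc0: "\<P>(w in M. Y w = y) > 0"
    show "IW_cond M p (UNIV :: bool set) As (\<lambda>w. Yh w = Y w) A (\<lambda>w. Y w = y) =
           2 powr (1 / p) *
             (\<Sum>a\<in>As. \<P>(w in M. A w = a \<bar> Y w = y) *
                \<bar>\<P>(w in M. Yh w = Y w \<bar> Y w = y \<and> A w = a) - \<P>(w in M. Yh w = Y w \<bar> Y w = y)\<bar>)"
    proof -
      define pc where "pc = \<P>(w in M. Y w = y)"
      define t where "t a = \<P>(w in M. Yh w = Y w \<and> A w = a \<and> Y w = y)" for a
      define f where "f a = \<P>(w in M. Yh w \<noteq> Y w \<and> A w = a \<and> Y w = y)" for a
      define ra where "ra a = \<P>(w in M. A w = a \<and> Y w = y)" for a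
      define s where "s = \<P>(w in M. Yh w = Y w \<and> Y w = y)"
      define s' where "s' = \<P>(w in M. Yh w \<noteq> Y w \<and> Y w = y)"
      have pc: "pc > 0" using pc0 by (simp add: pc_def)
      have tf: "t a + f a = ra a" for a
        unfolding t_def f_def ra_def by (rule prob_split) measurable
      have ss: "s + s' = pc"
        unfolding s_def s'_def pc_def by (rule prob_split) measurable
      have t0: "t a \<ge> 0" "f a \<ge> 0" for a by (simp_all add: t_def f_def)
      define P where "P = (\<lambda>(u, v). \<P>(w in M. (Yh w = Y w) = u \<and> A w = v \<bar> Y w = y))"
      define Q where "Q = (\<lambda>(u, v). \<P>(w in M. (Yh w = Y w) = u \<bar> Y w = y) * \<P>(w in M. A w = v \<bar> Y w = y))"
      have PT: "P (True, a) = t a / pc" for a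
        by (simp add: P_def cond_prob_def t_def pc_def conj_assoc)
      have PF: "P (False, a) = f a / pc" for a
        by (simp add: P_def cond_prob_def f_def pc_def conj_assoc)
      have QT: "Q (True, a) = s / pc * (ra a / pc)" for a
        by (simp add: Q_def cond_prob_def s_def ra_def pc_def)
      have QF: "Q (False, a) = s' / pc * (ra a / pc)" for a
        by (simp add: Q_def cond_prob_def s'_def ra_def pc_def)
      have sl: "(\<Sum>u\<in>UNIV. P (u, v)) = (\<Sum>u\<in>UNIV. Q (u, v))" for v
      proof -
        have "(\<Sum>u\<in>UNIV. P (u, v)) = (t v + f v) / pc" by (simp add: UNIV_bool PT PF add_divide_distrib)
        moreover have "(\<Sum>u\<in>UNIV. Q (u, v)) = (s + s') / pc * (ra v / pc)"
          by (simp add: UNIV_bool QT QF add_divide_distrib distrib_right)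
        ultimately show ?thesis using tf ss pc by simp
      qed
      have "IW_cond M p (UNIV :: bool set) As (\<lambda>w. Yh w = Y w) A (\<lambda>w. Y w = y)
          = 2 powr (1/p) / 2 * (\<Sum>z\<in>UNIV \<times> As. \<bar>P z - Q z\<bar>)"
        unfolding IW_cond_def P_def[symmetric] Q_def[symmetric]
        by (rule W1_eq[OF _ assms(2) p0 _ _ sl])
          (auto simp: P_def Q_def cond_prob_def intro!: divide_nonneg_nonneg mult_nonneg_nonneg)
      also have "(\<Sum>z\<in>UNIV \<times> As. \<bar>P z - Q z\<bar>) = (\<Sum>a\<in>As. \<bar>P (True, a) - Q (True, a)\<bar> + \<bar>P (False, a) - Q (False, a)\<bar>)"
      proof -
        have "(\<Sum>z\<in>UNIV \<times> As. \<bar>P z - Q z\<bar>) = (\<Sum>b\<in>UNIV. \<Sum>a\<in>As. \<bar>P (b, a) - Q (b, a)\<bar>)"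
          by (simp add: sum.cartesian_product case_prod_beta)
        then show ?thesis by (simp add: UNIV_bool sum.distrib)
      qed
      also have "\<dots> = (\<Sum>a\<in>As. 2 * (\<P>(w in M. A w = a \<bar> Y w = y) *
                \<bar>\<P>(w in M. Yh w = Y w \<bar> Y w = y \<and> A w = a) - \<P>(w in M. Yh w = Y w \<bar> Y w = y)\<bar>))"
      proof (rule sum.cong[OF refl])
        fix a assume a: "a \<in> As"
        have e1: "\<P>(w in M. A w = a \<bar> Y w = y) = ra a / pc"
          by (simp add: cond_prob_def ra_def pc_def)
        have e2: "\<P>(w in M. Y w = y \<and> A w = a) = ra a"
          unfolding ra_def by (rule arg_cong[where f="measure M"]) auto
        have e3: "\<P>(w in M. Yh w = Y w \<and> Y w = y \<and> A w = a) = t a"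
          unfolding t_def by (rule arg_cong[where f="measure M"]) auto
        have e4: "\<P>(w in M. Yh w = Y w \<bar> Y w = y) = s / pc"
          by (simp add: cond_prob_def s_def pc_def)
        have e5: "\<P>(w in M. Yh w = Y w \<bar> Y w = y \<and> A w = a) = t a / ra a"
          by (simp add: cond_prob_def e2 e3)
        have fa: "f a = ra a - t a" using tf[of a] by simp
        have s'e: "s' = pc - s" using ss by simp
        have key: "\<bar>t a / pc - s / pc * (ra a / pc)\<bar> = ra a / pc * \<bar>t a / ra a - s / pc\<bar>"
        proof (cases "ra a = 0")
          case True
          then have "t a = 0" using tf[of a] t0[of a] by simp
          then show ?thesis using True by simp
        next
          case False
          have "ra a \<ge> 0" using tf[of a] t0[of a] by simp
          then have ra: "ra a > 0" using False by simp
          have "ra a / pc * \<bar>t a / ra a - s / pc\<bar> = \<bar>ra a / pc * (t a / ra a - s / pc)\<bar>"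
            using ra pc by (simp add: abs_mult)
          also have "ra a / pc * (t a / ra a - s / pc) = t a / pc - s / pc * (ra a / pc)"
            using ra pc by (simp add: field_simps)
          finally show ?thesis by simp
        qed
        have "\<bar>P (False, a) - Q (False, a)\<bar> = \<bar>t a / pc - s / pc * (ra a / pc)\<bar>"
        proof -
          have "P (False, a) - Q (False, a) = - (t a / pc - s / pc * (ra a / pc))"
            using pc by (simp add: PF QF fa s'e field_simps)
          then show ?thesis by (simp only: abs_minus_cancel)
        qed
        moreover have "\<bar>P (True, a) - Q (True, a)\<bar> = \<bar>t a / pc - s / pc * (ra a / pc)\<bar>"
          by (simp only: PT QT)
        moreover have "2 * (\<P>(w in M. A w = a \<bar> Y w = y) *
                \<bar>\<P>(w in M. Yh w = Y w \<bar> Y w = y \<and> A w = a) - \<P>(w in M. Yh w = Y w \<bar> Y w = y)\<bar>)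
             = 2 * (ra a / pc * \<bar>t a / ra a - s / pc\<bar>)"
          by (simp only: e1 e4 e5)
        ultimately show "\<bar>P (True, a) - Q (True, a)\<bar> + \<bar>P (False, a) - Q (False, a)\<bar> =
          2 * (\<P>(w in M. A w = a \<bar> Y w = y) *
                \<bar>\<P>(w in M. Yh w = Y w \<bar> Y w = y \<and> A w = a) - \<P>(w in M. Yh w = Y w \<bar> Y w = y)\<bar>)"
          using key by linarith
      qed
      finally show ?thesis by (simp add: sum_distrib_left[symmetric])
    qed
  qed
qed

end
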